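(* If $0\le\alpha\eta\le1$, then \[ \rho^{\mathrm{dir}}_{\alpha,\eta}\le\sqrt{(1-\alpha\eta)^2-2\alpha(1-\alpha\eta)c_\Phi+\alpha^2L_\Phi^2}, \] and equivalently \[ \rho^{\mathrm{dir}}_{\alpha,\eta}\le\sqrt{1-2\alpha(c_\Phi+\eta)+\alpha^2(L_\Phi^2+2c_\Phi\eta+\eta^2)}. \] Consequently, if $0\le\alpha\eta\le1$, $c_\Phi+\eta>0$, and \[ 0<\alpha<\frac{2(c_\Phi+\eta)}{L_\Phi^2+2c_\Phi\eta+\eta^2}, \] then $\rho^{\mathrm{dir}}_{\alpha,\eta}<1$.
   Context: Consider a finite discounted MDP with state space $\mathcal S=\{1,\dots,|\mathcal S|\}$, action space $\mathcal A=\{1,\dots,|\mathcal A|\}$, transition probabilities $P(s'\mid s,a)$, and discount factor $\gamma\in(0,1)$. State-action vectors are ordered as $(1,1),(2,1),\dots,(|\mathcal S|,1),(1,2),\dots$. The matrix $P\in\mathbb R^{|\mathcal S||\mathcal A|\times|\mathcal S|}$ has rows $P(\cdot\mid s,a)$. The set $\Theta$ is the finite set of deterministic stationary policies $\pi:\mathcal S\to\mathcal A$. For $\pi\in\Theta$, $\Pi^\pi\in\mathbb R^{|\mathcal S|\times|\mathcal S||\mathcal A|}$ has entry $1$ at row $s$, column $(s,\pi(s))$, and zeros elsewhere. The feature matrix $\Phi\in\mathbb R^{|\mathcal S||\mathcal A|\times m}$ has full column rank. The distribution $d>0$ on $\mathcal S\times\mathcal A$ gives $D=\mathrm{diag}(d)$.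 The step size is $\alpha\in(0,1)$ and the regularization weight is $\eta\ge0$. Let $M_\pi:=\Phi^\top D\Phi-\gamma\Phi^\top DP\Pi^\pi\Phi$. Define \[ c_\Phi:=\min_{\pi\in\Theta}\lambda_{\min}\big((M_\pi+M_\pi^\top)/2\big),\qquad L_\Phi:=\max_{\pi\in\Theta}\|M_\pi\|_2. \] For $\pi\in\Theta$, define $A^\eta_\pi:=I-\alpha(M_\pi+\eta I)$, and let $\rho^{\mathrm{dir}}_{\alpha,\eta}$ be the joint spectral radius $\lim_k\max_{\pi_i\in\Theta}\|A^\eta_{\pi_k}\cdots A^\eta_{\pi_1}\|^{1/k}$ of $\{A^\eta_\pi:\pi\in\Theta\}$. *)

theory Defs
  imports "HOL-Analysis.Analysis"
begin

text \<open>State space 's, action space 'act, feature index 'm (all finite types).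
  State-action vectors are indexed by the type ('s \<times> 'act); the particular
  linear ordering of state-action pairs is immaterial.  Matrices are
  HOL-Analysis matrices: real^'col^'row.\<close>

definition policy_mat :: "('s::finite \<Rightarrow> 'act::finite) \<Rightarrow> real^('s \<times> 'act)^'s" where
  "policy_mat \<pi> = (\<chi> s sa. if sa = (s, \<pi> s) then 1 else 0)"

definition diag_mat :: "('n::finite \<Rightarrow> real) \<Rightarrow> real^'n^'n" where
  "diag_mat d = (\<chi> i j. if i = j then d i else 0)"

definition M_pol :: "real \<Rightarrow> real^'s^('s::finite \<times> 'act::finite) \<Rightarrow> real^'m::finite^('s \<times> 'act)
    \<Rightarrow> (('s \<times> 'act) \<Rightarrow> real) \<Rightarrow> ('s \<Rightarrow> 'act) \<Rightarrow> real^'m^'m" where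
  "M_pol \<gamma> P \<Phi> d \<pi> =
     transpose \<Phi> ** diag_mat d ** \<Phi> - \<gamma> *\<^sub>R (transpose \<Phi> ** diag_mat d ** P ** policy_mat \<pi> ** \<Phi>)"

text \<open>Real eigenvalues of a square real matrix, and the smallest one
  (used only for symmetric matrices, whose eigenvalues are all real).\<close>
definition real_eigenvalues :: "real^'n::finite^'n \<Rightarrow> real set" where
  "real_eigenvalues S = {c. \<exists>v. v \<noteq> 0 \<and> S *v v = c *\<^sub>R v}"

definition lambda_min :: "real^'n::finite^'n \<Rightarrow> real" where
  "lambda_min S = Min (real_eigenvalues S)"

definition spec_norm :: "real^'n::finite^'k::finite \<Rightarrow> real" where
  "spec_norm A = onorm (\<lambda>x. A *v x)"

text \<open>c_Phi and L_Phi; Theta = all deterministic policies = UNIV.\<close>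
definition c_Phi :: "real \<Rightarrow> real^'s^('s::finite \<times> 'act::finite) \<Rightarrow> real^'m::finite^('s \<times> 'act)
    \<Rightarrow> (('s \<times> 'act) \<Rightarrow> real) \<Rightarrow> real" where
  "c_Phi \<gamma> P \<Phi> d = Min ((\<lambda>\<pi>. lambda_min ((1/2) *\<^sub>R (M_pol \<gamma> P \<Phi> d \<pi> + transpose (M_pol \<gamma> P \<Phi> d \<pi>))))
                          ` (UNIV :: ('s \<Rightarrow> 'act) set))"

definition L_Phi :: "real \<Rightarrow> real^'s^('s::finite \<times> 'act::finite) \<Rightarrow> real^'m::finite^('s \<times> 'act)
    \<Rightarrow> (('s \<times> 'act) \<Rightarrow> real) \<Rightarrow> real" where
  "L_Phi \<gamma> P \<Phi> d = Max ((\<lambda>\<pi>. spec_norm (M_pol \<gamma> P \<Phi> d \<pi>)) ` (UNIV :: ('s \<Rightarrow> 'act) set))"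

definition A_pol :: "real \<Rightarrow> real \<Rightarrow> real \<Rightarrow> real^'s^('s::finite \<times> 'act::finite) \<Rightarrow> real^'m::finite^('s \<times> 'act)
    \<Rightarrow> (('s \<times> 'act) \<Rightarrow> real) \<Rightarrow> ('s \<Rightarrow> 'act) \<Rightarrow> real^'m^'m" where
  "A_pol \<alpha> \<eta> \<gamma> P \<Phi> d \<pi> = mat 1 - \<alpha> *\<^sub>R (M_pol \<gamma> P \<Phi> d \<pi> + \<eta> *\<^sub>R mat 1)"

text \<open>Product A_{pi_k} ... A_{pi_1} for the list [pi_1, ..., pi_k] (pi_1 applied first).\<close>
definition mat_prod_list :: "(real^'m::finite^'m) list \<Rightarrow> real^'m^'m" where
  "mat_prod_list As = foldl (\<lambda>acc A. A ** acc) (mat 1) As"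

definition jsr_seq :: "(('p::finite) \<Rightarrow> real^'m::finite^'m) \<Rightarrow> nat \<Rightarrow> real" where
  "jsr_seq F k = (Max {spec_norm (mat_prod_list (map F ps)) | ps. length ps = k}) powr (1 / real k)"

definition jsr :: "(('p::finite) \<Rightarrow> real^'m::finite^'m) \<Rightarrow> real" where
  "jsr F = lim (jsr_seq F)"

end

theory Submission
  imports Defs
begin

lemma submult_pow:
  fixes a :: "nat \<Rightarrow> real"
  assumes nn: "\<And>k. 0 \<le> a k" and sm: "\<And>m n. a (m+n) \<le> a m * a n"
  shows "q \<ge> 1 \<Longrightarrow> a (q*m + r) \<le> a m ^ q * (if r = 0 then 1 else a r)"
proof (induction q)
  case 0 then show ?case by simp
next
  case (Suc q)
  show ?case
  proof (cases "q = 0")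
    case True
    then show ?thesis using sm[of m r] by auto
  next
    case False
    then have ih: "a (q*m + r) \<le> a m ^ q * (if r = 0 then 1 else a r)" using Suc by simp
    have "a (Suc q * m + r) = a (m + (q*m + r))" by (simp add: algebra_simps)
    also have "\<dots> \<le> a m * a (q*m + r)" by (rule sm)
    also have "\<dots> \<le> a m * (a m ^ q * (if r = 0 then 1 else a r))"
      by (rule mult_left_mono[OF ih nn])
    finally show ?thesis by (simp add: algebra_simps)
  qed
qed

lemma fekete_conv:
  fixes a :: "nat \<Rightarrow> real"
  assumes nn: "\<And>k. 0 \<le> a k" and sm: "\<And>m n. a (m+n) \<le> a m * a n"
  shows "convergent (\<lambda>k. a k powr (1 / real k))"
proof -
  define b where "b k = a k powr (1 / real k)" for k
  define L where "L = Inf (b ` {1..})"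
  have bnn: "0 \<le> b k" for k unfolding b_def by simp
  have bdd: "bdd_below (b ` {1..})" using bnn by (intro bdd_belowI[where m=0]) auto
  have Lle: "L \<le> b k" if "k \<ge> 1" for k unfolding L_def using bdd that by (auto intro: cInf_lower)
  have L0: "0 \<le> L" unfolding L_def using bnn by (auto intro: cInf_greatest)
  have key: "\<exists>N. \<forall>k\<ge>N. b k < L + e" if e: "e > 0" for e
  proof -
    have "\<exists>x\<in>b ` {1..}. x < L + e/2"
      using e unfolding L_def by (intro cInf_lessD) auto
    then obtain m where m1: "m \<ge> 1" and bm: "b m < L + e/2" by auto
    have dec: "a k \<le> a m ^ (k div m) * (if k mod m = 0 then 1 else a (k mod m))" if "k \<ge> m" for k
    proof -
      have "k div m \<ge> 1" using that m1 by (simp add: Suc_le_eq div_greater_zero_iff)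
      then have "a ((k div m) * m + k mod m) \<le> a m ^ (k div m) * (if k mod m = 0 then 1 else a (k mod m))"
        by (rule submult_pow[OF nn sm])
      then show ?thesis by simp
    qed
    show ?thesis
    proof (cases "a m = 0")
      case True
      have "b k < L + e" if "k \<ge> m" for k
      proof -
        have "k div m \<ge> 1" using that m1 by (simp add: Suc_le_eq div_greater_zero_iff)
        then have "a k \<le> 0" using dec[OF that] True by (simp add: zero_power)
        then have "a k = 0" using nn[of k] by simp
        then show ?thesis using L0 e by (simp add: b_def)
      qed
      then show ?thesis by auto
    next
      case False
      then have am: "a m > 0" using nn[of m] by simp
      define \<beta> where "\<beta> = b m"
      have \<beta>pos: "\<beta> > 0" using am unfolding \<beta>_def b_def by simp
      have am_eq: "a m = \<beta> powr real m"
        unfolding \<beta>_def b_def using am m1 by (simp add: powr_powr)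
      define C where "C = max 1 (Max (a ` {..<m}))"
      define E where "E = max 1 (\<beta> powr (- real m))"
      define D where "D = C * E"
      have C1: "C \<ge> 1" unfolding C_def by simp
      have E1: "E \<ge> 1" unfolding E_def by simp
      have D1: "D \<ge> 1" unfolding D_def using C1 E1 by (metis mult_mono' zero_le_one mult_1)
      have bound: "a k \<le> \<beta> powr real k * D" if km: "k \<ge> m" for k
      proof -
        define q where "q = k div m"
        define r where "r = k mod m"
        have kqr: "real k = real q * real m + real r" unfolding q_def r_def
          by (metis div_mult_mod_eq of_nat_add of_nat_mult)
        have rm: "r < m" unfolding r_def using m1 by simp
        have X: "(if r = 0 then 1 else a r) \<le> C"
          unfolding C_def using rm by (auto intro!: max.coboundedI2 Max_ge)
        have Xnn: "0 \<le> (if r = 0 then 1 else a r)" using nn by simp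
        have pq: "a m ^ q = \<beta> powr real k * \<beta> powr (- real r)"
          unfolding am_eq kqr using \<beta>pos
          by (simp add: powr_realpow[symmetric] powr_powr powr_add[symmetric] algebra_simps)
        have rE: "\<beta> powr (- real r) \<le> E"
        proof (cases "\<beta> \<ge> 1")
          case True
          then have "\<beta> powr (- real r) \<le> 1" by (simp add: powr_minus_divide ge_one_powr_ge_zero)
          then show ?thesis unfolding E_def by simp
        next
          case False
          then have "\<beta> powr (- real r) \<le> \<beta> powr (- real m)"
            using \<beta>pos rm by (intro powr_mono') auto
          then show ?thesis unfolding E_def by simp
        qed
        have "a k \<le> a m ^ q * (if r = 0 then 1 else a r)" using dec[OF km] unfolding q_def r_def .
        also have "\<dots> \<le> a m ^ q * C" using X am by (intro mult_left_mono) auto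
        also have "\<dots> = \<beta> powr real k * \<beta> powr (- real r) * C" using pq by simp
        also have "\<dots> \<le> \<beta> powr real k * E * C" using rE C1 \<beta>pos
          by (intro mult_right_mono mult_left_mono) auto
        finally show ?thesis unfolding D_def by (simp add: algebra_simps)
      qed
      have lim: "(\<lambda>k. D powr (1 / real k)) \<longlonglongrightarrow> D powr 0"
        using D1 by (intro tendsto_intros lim_1_over_n) auto
      then have "\<forall>\<^sub>F k in sequentially. D powr (1 / real k) < 1 + e / (2 * \<beta>)"
        using e \<beta>pos D1 by (intro order_tendstoD) (auto simp: add_pos_pos)
      then obtain N where N: "\<And>k. k \<ge> N \<Longrightarrow> D powr (1 / real k) < 1 + e / (2 * \<beta>)"
        unfolding eventually_sequentially by auto
      have "b k < L + e" if k: "k \<ge> max N m" for k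
      proof -
        have kpos: "k > 0" using k m1 by simp
        have "b k \<le> (\<beta> powr real k * D) powr (1 / real k)"
          unfolding b_def using bound[of k] k nn by (intro powr_mono2) auto
        also have "\<dots> = \<beta> * D powr (1 / real k)"
          using \<beta>pos D1 kpos by (simp add: powr_mult powr_powr)
        also have "\<dots> < \<beta> * (1 + e / (2 * \<beta>))"
          using N[of k] k \<beta>pos by simp
        also have "\<dots> = \<beta> + e/2" using \<beta>pos by (simp add: field_simps)
        also have "\<dots> < L + e" using bm unfolding \<beta>_def by simp
        finally show ?thesis .
      qed
      then show ?thesis by blast
    qed
  qed
  have "b \<longlonglongrightarrow> L"
  proof (rule LIMSEQ_I)
    fix e :: real assume e: "e > 0"
    obtain N where N: "\<And>k. k \<ge> N \<Longrightarrow> b k < L + e" using key[OF e] by auto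
    show "\<exists>no. \<forall>n\<ge>no. norm (b n - L) < e"
    proof (intro exI allI impI)
      fix n assume "max N 1 \<le> n"
      then show "norm (b n - L) < e" using N[of n] Lle[of n] by auto
    qed
  qed
  then show ?thesis unfolding b_def convergent_def by blast
qed


lemma spec_norm_nn: "0 \<le> spec_norm A"
  unfolding spec_norm_def by (rule onorm_pos_le[OF matrix_vector_mul_bounded_linear])

lemma spec_norm_mul: "spec_norm (A ** B) \<le> spec_norm A * spec_norm B"
proof -
  have "(\<lambda>x. (A ** B) *v x) = (\<lambda>x. A *v x) \<circ> (\<lambda>x. B *v x)"
    by (auto simp: matrix_vector_mul_assoc)
  then show ?thesis unfolding spec_norm_def
    using onorm_compose[OF matrix_vector_mul_bounded_linear matrix_vector_mul_bounded_linear]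
    by (metis (no_types) eta_contract_eq)
qed

lemma spec_norm_id: "spec_norm (mat 1 :: real^'n::finite^'n) \<le> 1"
  unfolding spec_norm_def by (rule onorm_le) simp

lemma spec_norm_apply: "norm (A *v x) \<le> spec_norm A * norm x"
  unfolding spec_norm_def using onorm[OF matrix_vector_mul_bounded_linear] by blast

lemma foldl_mpl:
  fixes B :: "real^'m::finite^'m"
  shows "foldl (\<lambda>acc A. A ** acc) B ys = mat_prod_list ys ** B"
proof (induction ys arbitrary: B)
  case Nil then show ?case by (simp add: mat_prod_list_def matrix_mul_lid)
next
  case (Cons y ys)
  have "foldl (\<lambda>acc A. A ** acc) B (y # ys) = mat_prod_list ys ** (y ** B)" using Cons by simp
  moreover have "mat_prod_list (y # ys) = mat_prod_list ys ** y"
    using Cons[of "y ** mat 1"] by (simp add: mat_prod_list_def matrix_mul_rid)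
  ultimately show ?case by (simp add: matrix_mul_assoc)
qed

lemma mpl_append: "mat_prod_list (xs @ ys) = mat_prod_list ys ** mat_prod_list xs"
proof -
  have "mat_prod_list (xs @ ys) = foldl (\<lambda>acc A. A ** acc) (foldl (\<lambda>acc A. A ** acc) (mat 1) xs) ys"
    by (simp add: mat_prod_list_def)
  also have "\<dots> = mat_prod_list ys ** foldl (\<lambda>acc A. A ** acc) (mat 1) xs" by (rule foldl_mpl)
  finally show ?thesis by (simp only: mat_prod_list_def)
qed

lemma mpl_single: "mat_prod_list [x] = x"
  by (simp add: mat_prod_list_def matrix_mul_rid)

lemma mpl_bound:
  assumes "\<And>p. spec_norm (F p) \<le> q" "0 \<le> q"
  shows "spec_norm (mat_prod_list (map F ps)) \<le> q ^ length ps"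
proof (induction ps rule: rev_induct)
  case Nil then show ?case by (simp add: mat_prod_list_def spec_norm_id)
next
  case (snoc x xs)
  have "spec_norm (mat_prod_list (map F (xs @ [x]))) = spec_norm (F x ** mat_prod_list (map F xs))"
    by (simp add: mpl_append mpl_single)
  also have "\<dots> \<le> spec_norm (F x) * spec_norm (mat_prod_list (map F xs))" by (rule spec_norm_mul)
  also have "\<dots> \<le> q * q ^ length xs"
    using assms snoc spec_norm_nn by (intro mult_mono) auto
  finally show ?case by simp
qed

lemma jsr_le:
  fixes F :: "'p::finite \<Rightarrow> real^'m::finite^'m"
  assumes bnd: "\<And>p. spec_norm (F p) \<le> q"
  shows "jsr F \<le> q"
proof -
  have q0: "0 \<le> q" using bnd[of undefined] spec_norm_nn[of "F undefined"] by linarith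
  define a where "a k = Max {spec_norm (mat_prod_list (map F ps)) | ps. length ps = k}" for k
  have setq: "{spec_norm (mat_prod_list (map F ps)) | ps. length ps = k}
     = (\<lambda>ps. spec_norm (mat_prod_list (map F ps))) ` {ps. length ps = k}" for k by auto
  have fin: "finite {spec_norm (mat_prod_list (map F ps)) | ps. length ps = k}" for k
    unfolding setq by (intro finite_imageI finite_list_length)
  have ne: "{spec_norm (mat_prod_list (map F ps)) | ps. length ps = k} \<noteq> {}" for k
    by (auto intro!: exI[of _ "replicate k undefined"])
  have ge: "spec_norm (mat_prod_list (map F ps)) \<le> a (length ps)" for ps
    unfolding a_def using fin by (intro Max_ge) auto
  have aq: "a k \<le> q ^ k" for k
    unfolding a_def using fin ne mpl_bound[OF bnd q0] by (subst Max_le_iff) auto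
  have ann: "0 \<le> a k" for k
    using ge[of "replicate k undefined"] spec_norm_nn by (metis length_replicate order_trans)
  have sm: "a (m + n) \<le> a m * a n" for m n
  proof -
    have "x \<le> a m * a n" if xin: "x \<in> {spec_norm (mat_prod_list (map F ps)) | ps. length ps = m + n}" for x
    proof -
      obtain ps where ps: "length ps = m + n" "x = spec_norm (mat_prod_list (map F ps))" using xin by auto
      define xs where "xs = take m ps"
      define ys where "ys = drop m ps"
      have "ps = xs @ ys" unfolding xs_def ys_def by simp
      then have "x = spec_norm (mat_prod_list (map F ys) ** mat_prod_list (map F xs))"
        using ps by (simp add: mpl_append)
      also have "\<dots> \<le> spec_norm (mat_prod_list (map F ys)) * spec_norm (mat_prod_list (map F xs))"
        by (rule spec_norm_mul)
      also have "\<dots> \<le> a n * a m"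
        using ge[of ys] ge[of xs] ps spec_norm_nn ann unfolding xs_def ys_def
        by (intro mult_mono) auto
      finally show ?thesis by (simp add: mult.commute)
    qed
    then show ?thesis unfolding a_def[of "m+n"] using fin ne by (subst Max_le_iff) auto
  qed
  have seq: "jsr_seq F = (\<lambda>k. a k powr (1 / real k))"
    unfolding jsr_seq_def a_def by simp
  have conv: "convergent (jsr_seq F)" unfolding seq by (rule fekete_conv[OF ann sm])
  then have lim: "jsr_seq F \<longlonglongrightarrow> jsr F" unfolding jsr_def by (simp add: convergent_LIMSEQ_iff)
  have "jsr_seq F k \<le> q" if "k \<ge> 1" for k
  proof -
    have "jsr_seq F k \<le> (q ^ k) powr (1 / real k)"
      unfolding seq using aq[of k] ann[of k] by (intro powr_mono2) auto
    also have "\<dots> = q" using that q0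
      by (cases "q = 0") (auto simp: powr_realpow[symmetric] powr_powr)
    finally show ?thesis .
  qed
  then show ?thesis using lim by (intro LIMSEQ_le_const2[OF lim]) (auto intro: exI[of _ 1])
qed


lemma sym_inner:
  fixes S :: "real^'n::finite^'n"
  assumes "transpose S = S"
  shows "x \<bullet> (S *v y) = (S *v x) \<bullet> y"
proof -
  have "x \<bullet> (S *v y) = (x v* S) \<bullet> y" by (simp add: dot_lmul_matrix)
  also have "x v* S = transpose S *v x" by (simp add: transpose_matrix_vector)
  finally show ?thesis using assms by simp
qed

lemma eig_finite:
  fixes S :: "real^'n::finite^'n"
  assumes sym: "transpose S = S"
  shows "finite (real_eigenvalues S)"
proof -
  define E where "E = real_eigenvalues S"
  define v where "v c = (SOME v. v \<noteq> 0 \<and> S *v v = c *\<^sub>R v)" for c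
  have vp: "v c \<noteq> 0 \<and> S *v v c = c *\<^sub>R v c" if "c \<in> E" for c
  proof -
    have "\<exists>v. v \<noteq> 0 \<and> S *v v = c *\<^sub>R v" using that unfolding E_def real_eigenvalues_def by simp
    then show ?thesis unfolding v_def by (rule someI_ex)
  qed
  have orth: "v c \<bullet> v c' = 0" if "c \<in> E" "c' \<in> E" "c \<noteq> c'" for c c'
  proof -
    have "c * (v c \<bullet> v c') = (S *v v c) \<bullet> v c'" using vp[OF that(1)] by simp
    also have "\<dots> = v c \<bullet> (S *v v c')" using sym_inner[OF sym] by simp
    also have "\<dots> = c' * (v c \<bullet> v c')" using vp[OF that(2)] by simp
    finally show ?thesis using that(3) by simp
  qed
  have inj: "inj_on v E"
  proof (rule inj_onI)
    fix c c' assume cc: "c \<in> E" "c' \<in> E" "v c = v c'"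
    show "c = c'"
    proof (rule ccontr)
      assume "c \<noteq> c'"
      then have "v c \<bullet> v c = 0" using orth[OF cc(1,2)] cc(3) by simp
      then show False using vp[OF cc(1)] by simp
    qed
  qed
  have "pairwise orthogonal (v ` E)"
    unfolding pairwise_def orthogonal_def using orth by auto
  moreover have "0 \<notin> v ` E" using vp by auto
  ultimately have "independent (v ` E)" by (rule pairwise_orthogonal_independent)
  then have "finite (v ` E)" using independent_bound by blast
  then show ?thesis using inj finite_imageD unfolding E_def by blast
qed

lemma rayleigh:
  fixes S :: "real^'n::finite^'n"
  assumes sym: "transpose S = S"
  shows "\<exists>r\<in>real_eigenvalues S. \<forall>x. r * (x \<bullet> x) \<le> x \<bullet> (S *v x)"
proof -
  define f where "f x = x \<bullet> (S *v x)" for x :: "real^'n"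
  have cont: "continuous_on (sphere 0 1) f"
    unfolding f_def by (intro continuous_intros linear_continuous_on bounded_linear.linear matrix_vector_mul_bounded_linear)
  have ne: "sphere (0::real^'n) 1 \<noteq> {}" by simp
  obtain x0 where x0: "x0 \<in> sphere 0 1" and min: "\<And>y. y \<in> sphere 0 1 \<Longrightarrow> f x0 \<le> f y"
    using continuous_attains_inf[OF compact_sphere ne cont] by blast
  define r where "r = f x0"
  have nx0: "norm x0 = 1" using x0 by simp
  have ge: "r * (y \<bullet> y) \<le> f y" for y
  proof (cases "y = 0")
    case True then show ?thesis by (simp add: f_def)
  next
    case False
    define u where "u = (1 / norm y) *\<^sub>R y"
    have "u \<in> sphere 0 1" unfolding u_def using False by simp
    then have "r \<le> f u" using min unfolding r_def by simp
    also have "f u = f y / (norm y)^2" unfolding u_def f_def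
      by (simp add: matrix_vector_mult_scaleR power2_eq_square)
    finally have "r * (norm y)^2 \<le> f y" using False by (simp add: field_simps)
    then show ?thesis by (simp add: power2_norm_eq_inner)
  qed
  define w where "w = S *v x0 - r *\<^sub>R x0"
  define h where "h y = f y - r * (y \<bullet> y)" for y
  have hge: "0 \<le> h y" for y using ge[of y] unfolding h_def by simp
  have hx0: "h x0 = 0" unfolding h_def r_def using nx0 by (simp add: power2_norm_eq_inner[symmetric])
  have Sdiff: "S *v (x0 - s *\<^sub>R w) = S *v x0 - s *\<^sub>R (S *v w)" for s
    by (simp add: matrix_vector_mult_diff_distrib matrix_vector_mult_scaleR)
  have exp: "h (x0 - s *\<^sub>R w) = h x0 - 2 * s * (w \<bullet> w) + s^2 * h w" for s
  proof -
    have sw: "x0 \<bullet> (S *v w) = w \<bullet> (S *v x0)" using sym_inner[OF sym, of x0 w] by (simp add: inner_commute)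
    show ?thesis unfolding h_def f_def Sdiff using sw
      by (simp add: w_def inner_diff_left inner_diff_right power2_eq_square algebra_simps inner_commute)
  qed
  have w0: "w = 0"
  proof (rule ccontr)
    assume "w \<noteq> 0"
    then have wp: "w \<bullet> w > 0" by simp
    define s where "s = (w \<bullet> w) / (h w + 1)"
    have sp: "s > 0" unfolding s_def using wp hge[of w] by simp
    have "0 \<le> h (x0 - s *\<^sub>R w)" by (rule hge)
    then have "2 * s * (w \<bullet> w) \<le> s^2 * h w" using exp[of s] hx0 by simp
    then have "2 * (w \<bullet> w) \<le> s * h w" using sp by (simp add: power2_eq_square)
    also have "s * h w < w \<bullet> w" unfolding s_def using wp hge[of w]
      by (simp add: field_simps)
    finally show False using wp by simp
  qed
  have "r \<in> real_eigenvalues S" unfolding real_eigenvalues_def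
    using w0 nx0 unfolding w_def by (intro CollectI exI[of _ x0]) auto
  then show ?thesis using ge unfolding f_def by blast
qed

lemma lmin_le:
  fixes S :: "real^'n::finite^'n"
  assumes sym: "transpose S = S"
  shows "lambda_min S * (x \<bullet> x) \<le> x \<bullet> (S *v x)"
proof -
  obtain r where r: "r \<in> real_eigenvalues S" "\<And>x. r * (x \<bullet> x) \<le> x \<bullet> (S *v x)"
    using rayleigh[OF sym] by blast
  have "lambda_min S \<le> r" unfolding lambda_min_def using eig_finite[OF sym] r(1) by (rule Min_le)
  then have "lambda_min S * (x \<bullet> x) \<le> r * (x \<bullet> x)" by (intro mult_right_mono) auto
  then show ?thesis using r(2)[of x] by linarith
qed

lemma symm_part:
  fixes M :: "real^'n::finite^'n"
  defines "S \<equiv> (1/2) *\<^sub>R (M + transpose M)"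
  shows "transpose S = S" and "x \<bullet> (S *v x) = x \<bullet> (M *v x)"
proof -
  show "transpose S = S" unfolding S_def transpose_def by (simp add: vec_eq_iff add.commute)
  have "x \<bullet> (transpose M *v x) = x \<bullet> (M *v x)"
    by (simp add: transpose_matrix_vector dot_lmul_matrix[symmetric] inner_commute)
  then show "x \<bullet> (S *v x) = x \<bullet> (M *v x)" unfolding S_def
    by (simp add: scaleR_matrix_vector_assoc[symmetric] matrix_vector_mult_add_rdistrib inner_add_right)
qed

lemma A_bound:
  fixes M :: "real^'n::finite^'n"
  assumes cq: "\<And>x. c * (x \<bullet> x) \<le> x \<bullet> (M *v x)"
    and Ln: "\<And>x. norm (M *v x) \<le> L * norm x"
    and L0: "0 \<le> L" and t0: "0 \<le> 1 - \<alpha> * \<eta>" and a0: "0 \<le> \<alpha>"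
  shows "spec_norm (mat 1 - \<alpha> *\<^sub>R (M + \<eta> *\<^sub>R mat 1))
     \<le> sqrt ((1 - \<alpha> * \<eta>)\<^sup>2 - 2 * \<alpha> * (1 - \<alpha> * \<eta>) * c + \<alpha>\<^sup>2 * L\<^sup>2)"
proof -
  define t where "t = 1 - \<alpha> * \<eta>"
  define R where "R = t\<^sup>2 - 2 * \<alpha> * t * c + \<alpha>\<^sup>2 * L\<^sup>2"
  have "norm ((mat 1 - \<alpha> *\<^sub>R (M + \<eta> *\<^sub>R mat 1)) *v x) \<le> sqrt R * norm x" for x
  proof -
    have Ax: "(mat 1 - \<alpha> *\<^sub>R (M + \<eta> *\<^sub>R mat 1)) *v x = t *\<^sub>R x - \<alpha> *\<^sub>R (M *v x)"
      unfolding t_def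
      by (simp add: matrix_vector_mult_diff_rdistrib scaleR_matrix_vector_assoc[symmetric]
          matrix_vector_mult_add_rdistrib algebra_simps)
    have eq: "(norm (t *\<^sub>R x - \<alpha> *\<^sub>R (M *v x)))\<^sup>2
       = t\<^sup>2 * (x \<bullet> x) - 2 * \<alpha> * t * (x \<bullet> (M *v x)) + \<alpha>\<^sup>2 * (norm (M *v x))\<^sup>2"
      unfolding power2_norm_eq_inner
      by (simp add: inner_diff_left inner_diff_right power2_eq_square
          algebra_simps inner_commute)
    have i1: "2 * \<alpha> * t * (c * (x \<bullet> x)) \<le> 2 * \<alpha> * t * (x \<bullet> (M *v x))"
      using cq[of x] a0 t0 unfolding t_def by (intro mult_left_mono) auto
    have i2: "(norm (M *v x))\<^sup>2 \<le> (L * norm x)\<^sup>2"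
      using Ln[of x] by (intro power_mono) auto
    have "(norm (t *\<^sub>R x - \<alpha> *\<^sub>R (M *v x)))\<^sup>2 \<le> R * (norm x)\<^sup>2"
    proof -
      have "\<alpha>\<^sup>2 * (norm (M *v x))\<^sup>2 \<le> \<alpha>\<^sup>2 * (L * norm x)\<^sup>2" using i2 by (intro mult_left_mono) auto
      then show ?thesis unfolding eq R_def using i1
        by (simp add: power2_norm_eq_inner power_mult_distrib algebra_simps)
    qed
    then have "sqrt ((norm (t *\<^sub>R x - \<alpha> *\<^sub>R (M *v x)))\<^sup>2) \<le> sqrt (R * (norm x)\<^sup>2)"
      by (rule real_sqrt_le_mono)
    then show ?thesis unfolding Ax by (simp add: real_sqrt_mult)
  qed
  then show ?thesis unfolding spec_norm_def R_def t_def by (rule onorm_le)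
qed

theorem proposition6:
  fixes P :: "real^'s^('s::finite \<times> 'act::finite)"
    and \<Phi> :: "real^'m::finite^('s \<times> 'act)"
    and d :: "('s \<times> 'act) \<Rightarrow> real"
    and \<gamma> \<alpha> \<eta> :: real
  assumes gamma: "0 < \<gamma>" "\<gamma> < 1"
    and P_nonneg: "\<forall>sa s'. 0 \<le> P $ sa $ s'"
    and P_stoch: "\<forall>sa. (\<Sum>s'\<in>UNIV. P $ sa $ s') = 1"
    and Phi_rank: "rank \<Phi> = CARD('m)"
    and d_pos: "\<forall>sa. 0 < d sa"
    and d_sum: "(\<Sum>sa\<in>UNIV. d sa) = 1"
    and alpha: "0 < \<alpha>" "\<alpha> < 1"
    and eta: "0 \<le> \<eta>"
    and alpha_eta: "0 \<le> \<alpha> * \<eta>" "\<alpha> * \<eta> \<le> 1"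
  shows "jsr (A_pol \<alpha> \<eta> \<gamma> P \<Phi> d)
           \<le> sqrt ((1 - \<alpha> * \<eta>)\<^sup>2 - 2 * \<alpha> * (1 - \<alpha> * \<eta>) * c_Phi \<gamma> P \<Phi> d
                   + \<alpha>\<^sup>2 * (L_Phi \<gamma> P \<Phi> d)\<^sup>2)
       \<and> jsr (A_pol \<alpha> \<eta> \<gamma> P \<Phi> d)
           \<le> sqrt (1 - 2 * \<alpha> * (c_Phi \<gamma> P \<Phi> d + \<eta>)
                   + \<alpha>\<^sup>2 * ((L_Phi \<gamma> P \<Phi> d)\<^sup>2 + 2 * c_Phi \<gamma> P \<Phi> d * \<eta> + \<eta>\<^sup>2))
       \<and> ((c_Phi \<gamma> P \<Phi> d + \<eta> > 0
            \<and> \<alpha> < 2 * (c_Phi \<gamma> P \<Phi> d + \<eta>)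
                    / ((L_Phi \<gamma> P \<Phi> d)\<^sup>2 + 2 * c_Phi \<gamma> P \<Phi> d * \<eta> + \<eta>\<^sup>2))
           \<longrightarrow> jsr (A_pol \<alpha> \<eta> \<gamma> P \<Phi> d) < 1)"
proof -
  define c where "c = c_Phi \<gamma> P \<Phi> d"
  define L where "L = L_Phi \<gamma> P \<Phi> d"
  define M where "M \<pi> = M_pol \<gamma> P \<Phi> d \<pi>" for \<pi>
  define R1 where "R1 = (1 - \<alpha> * \<eta>)\<^sup>2 - 2 * \<alpha> * (1 - \<alpha> * \<eta>) * c + \<alpha>\<^sup>2 * L\<^sup>2"
  have cle: "c * (x \<bullet> x) \<le> x \<bullet> (M \<pi> *v x)" for \<pi> x
  proof -
    define S where "S = (1/2) *\<^sub>R (M \<pi> + transpose (M \<pi>))"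
    have "c \<le> lambda_min S" unfolding c_def c_Phi_def S_def M_def by (rule Min_le) auto
    then have "c * (x \<bullet> x) \<le> lambda_min S * (x \<bullet> x)" by (intro mult_right_mono) auto
    also have "\<dots> \<le> x \<bullet> (S *v x)" using lmin_le[OF symm_part(1)] unfolding S_def by blast
    also have "\<dots> = x \<bullet> (M \<pi> *v x)" unfolding S_def by (rule symm_part(2))
    finally show ?thesis .
  qed
  have Lle: "spec_norm (M \<pi>) \<le> L" for \<pi>
    unfolding L_def L_Phi_def M_def by (rule Max_ge) auto
  have L0: "0 \<le> L" using Lle[of undefined] spec_norm_nn[of "M undefined"] by linarith
  have Ln: "norm (M \<pi> *v x) \<le> L * norm x" for \<pi> x
    using spec_norm_apply[of "M \<pi>" x] Lle[of \<pi>] by (meson mult_right_mono norm_ge_zero order_trans)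
  have bnd: "spec_norm (A_pol \<alpha> \<eta> \<gamma> P \<Phi> d \<pi>) \<le> sqrt R1" for \<pi>
    unfolding A_pol_def R1_def M_def[symmetric]
    using A_bound[OF cle Ln L0] alpha_eta alpha by simp
  have j1: "jsr (A_pol \<alpha> \<eta> \<gamma> P \<Phi> d) \<le> sqrt R1" by (rule jsr_le[OF bnd])
  have R1eq: "R1 = 1 - 2 * \<alpha> * (c + \<eta>) + \<alpha>\<^sup>2 * (L\<^sup>2 + 2 * c * \<eta> + \<eta>\<^sup>2)"
    unfolding R1_def by (simp add: power2_eq_square algebra_simps)
  have j3: "jsr (A_pol \<alpha> \<eta> \<gamma> P \<Phi> d) < 1"
    if h: "c + \<eta> > 0" "\<alpha> < 2 * (c + \<eta>) / (L\<^sup>2 + 2 * c * \<eta> + \<eta>\<^sup>2)"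
  proof -
    define D where "D = L\<^sup>2 + 2 * c * \<eta> + \<eta>\<^sup>2"
    have Dp: "D > 0"
    proof (rule ccontr)
      assume "\<not> D > 0"
      then have "2 * (c + \<eta>) / D \<le> 0" using h(1) by (simp add: divide_nonneg_nonpos)
      then show False using h(2) alpha unfolding D_def by simp
    qed
    have "\<alpha> * D < 2 * (c + \<eta>)" using h(2) Dp unfolding D_def[symmetric] by (simp add: field_simps)
    then have "\<alpha>\<^sup>2 * D < 2 * \<alpha> * (c + \<eta>)" using alpha
      by (simp add: power2_eq_square)
    then have "R1 < 1" unfolding R1eq D_def by simp
    then have "sqrt R1 < 1" by simp
    then show ?thesis using j1 by linarith
  qed
  show ?thesis using j1 j3 R1eq unfolding R1_def c_def[symmetric] L_def[symmetric] by auto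
qed

end
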